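(* Let $a_1,\dots,a_d$ be positive integers with $\gcd(a_1,\dots,a_d)=1$ and let $N$ be a positive integer. Let $\mathcal M$ be a maximal element (for inclusion) of $\mathfrak M$ with $0\in\mathcal M$, and let $i\in\{0,\dots,N-1\}$. Then $\mathcal M$ contains an element congruent to $i$ modulo $N$.
   Context: $\mathcal S_+=\{N+\sum_ic_ia_i: c_i\in\mathbb Z_{\ge0}\}$, $\mathcal S_-=-\mathcal S_+$, $\mathcal S=\mathcal S_+\cup\mathcal S_-$, and $\mathfrak M=\{\mathcal M\subset\mathbb Z:\ m,m'\in\mathcal M\Rightarrow m-m'\notin\mathcal S\}$, partially ordered by inclusion. *)

theory Defs
  imports Main
begin

definition Splus :: "nat \<Rightarrow> (nat \<Rightarrow> int) \<Rightarrow> int \<Rightarrow> int set" where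
  "Splus d a N = {N + (\<Sum>i=1..d. c i * a i) | c. \<forall>i\<in>{1..d}. c i \<ge> 0}"

definition Sminus :: "nat \<Rightarrow> (nat \<Rightarrow> int) \<Rightarrow> int \<Rightarrow> int set" where
  "Sminus d a N = uminus ` Splus d a N"

definition Sset :: "nat \<Rightarrow> (nat \<Rightarrow> int) \<Rightarrow> int \<Rightarrow> int set" where
  "Sset d a N = Splus d a N \<union> Sminus d a N"

definition frakM :: "nat \<Rightarrow> (nat \<Rightarrow> int) \<Rightarrow> int \<Rightarrow> int set set" where
  "frakM d a N = {M. \<forall>m\<in>M. \<forall>m'\<in>M. m - m' \<notin> Sset d a N}"

definition maximal_in :: "'a set \<Rightarrow> 'a set set \<Rightarrow> bool" where
  "maximal_in M F \<longleftrightarrow> M \<in> F \<and> (\<forall>M'\<in>F. M \<subseteq> M' \<longrightarrow> M' = M)"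

end

theory Submission
  imports Defs
begin

definition Tset :: "nat \<Rightarrow> (nat \<Rightarrow> int) \<Rightarrow> int set" where
  "Tset d a = {(\<Sum>i=1..d. c i * a i) | c. \<forall>i\<in>{1..d}. c i \<ge> 0}"

lemma Splus_iff: "y \<in> Splus d a N \<longleftrightarrow> y - N \<in> Tset d a"
proof
  assume "y \<in> Splus d a N"
  then obtain c where "y = N + (\<Sum>i=1..d. c i * a i)" "\<forall>i\<in>{1..d}. c i \<ge> 0"
    unfolding Splus_def by auto
  thus "y - N \<in> Tset d a" unfolding Tset_def by auto
next
  assume "y - N \<in> Tset d a"
  then obtain c where "y - N = (\<Sum>i=1..d. c i * a i)" "\<forall>i\<in>{1..d}. c i \<ge> 0"
    unfolding Tset_def by auto
  thus "y \<in> Splus d a N" unfolding Splus_def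
    by (auto intro!: exI[of _ c] simp: algebra_simps)
qed

lemma Sset_iff: "y \<in> Sset d a N \<longleftrightarrow> y - N \<in> Tset d a \<or> -y - N \<in> Tset d a"
  unfolding Sset_def Sminus_def using Splus_iff
  by (auto simp: image_iff) (metis minus_minus)

lemma T_nonneg:
  assumes "\<forall>j\<in>{1..d}. a j > 0" "t \<in> Tset d a" shows "t \<ge> 0"
  using assms unfolding Tset_def by (auto intro!: sum_nonneg)

lemma T_add:
  assumes "s \<in> Tset d a" "t \<in> Tset d a" shows "s + t \<in> Tset d a"
proof -
  obtain c where c: "s = (\<Sum>i=1..d. c i * a i)" "\<forall>i\<in>{1..d}. c i \<ge> 0"
    using assms(1) unfolding Tset_def by auto
  obtain c' where c': "t = (\<Sum>i=1..d. c' i * a i)" "\<forall>i\<in>{1..d}. c' i \<ge> 0"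
    using assms(2) unfolding Tset_def by auto
  have "s + t = (\<Sum>i=1..d. (c i + c' i) * a i)"
    using c c' by (simp add: sum.distrib distrib_right)
  moreover have "\<forall>i\<in>{1..d}. c i + c' i \<ge> 0" using c c' by auto
  ultimately show ?thesis unfolding Tset_def mem_Collect_eq
    by (intro exI[of _ "\<lambda>i. c i + c' i"]) auto
qed

lemma bezout_set: "\<exists>c::nat\<Rightarrow>int. (\<Sum>i=1..d. c i * a i) = Gcd (a ` {1..d})"
proof (induction d)
  case 0
  then show ?case by simp
next
  case (Suc d)
  obtain c where c: "(\<Sum>i=1..d. c i * a i) = Gcd (a ` {1..d})" using Suc by blast
  obtain u v where uv: "u * a (Suc d) + v * Gcd (a ` {1..d}) = gcd (a (Suc d)) (Gcd (a ` {1..d}))"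
    using bezout_int by blast
  define c' where "c' = (\<lambda>i. if i = Suc d then u else v * c i)"
  have "{1..Suc d} = insert (Suc d) {1..d}" by auto
  hence G: "Gcd (a ` {1..Suc d}) = gcd (a (Suc d)) (Gcd (a ` {1..d}))" by simp
  have "(\<Sum>i=1..Suc d. c' i * a i) = c' (Suc d) * a (Suc d) + (\<Sum>i=1..d. c' i * a i)"
    by simp
  also have "(\<Sum>i=1..d. c' i * a i) = v * (\<Sum>i=1..d. c i * a i)"
    unfolding c'_def by (simp add: sum_distrib_left mult.assoc)
  finally have "(\<Sum>i=1..Suc d. c' i * a i) = u * a (Suc d) + v * Gcd (a ` {1..d})"
    using c by (simp add: c'_def)
  then show ?case using uv G by metis
qed

lemma T_big:
  assumes pos: "\<forall>j\<in>{1..d}. a j > 0" and g: "Gcd (a ` {1..d}) = 1"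
  shows "\<exists>F. \<forall>n\<ge>F. n \<in> Tset d a"
proof -
  have "d \<ge> 1"
  proof (rule ccontr)
    assume "\<not> d \<ge> 1" hence "d = 0" by simp
    thus False using g by simp
  qed
  hence a1: "a 1 > 0" using pos by auto
  obtain c where c: "(\<Sum>i=1..d. c i * a i) = 1" using bezout_set[where d=d and a=a] g by auto
  define c1 where "c1 = (\<lambda>i. c i mod a 1)"
  define s where "s = (\<Sum>i=1..d. c1 i * a i)"
  have c1nn: "\<forall>i. c1 i \<ge> 0" using a1 unfolding c1_def by simp
  have "s mod a 1 = (\<Sum>i=1..d. c i * a i) mod a 1"
    unfolding s_def c1_def
    by (rule mod_sum_eq[symmetric, THEN trans, OF _]) (smt (verit) mod_mult_left_eq mod_sum_eq sum.cong)
  hence smod: "s mod a 1 = 1 mod a 1" using c by simp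
  have s0: "s \<ge> 0" unfolding s_def using c1nn pos by (auto intro!: sum_nonneg)
  show ?thesis
  proof (intro exI allI impI)
    fix n :: int assume n: "n \<ge> (a 1 - 1) * s"
    define r where "r = n mod a 1"
    have r: "0 \<le> r" "r \<le> a 1 - 1" using a1 unfolding r_def by auto
    have "r * s \<le> (a 1 - 1) * s" using r s0 by (simp add: mult_right_mono)
    hence rs: "r * s \<le> n" using n by linarith
    have "(r * s) mod a 1 = (r * 1) mod a 1"
      by (metis mod_mult_right_eq smod)
    hence "(n - r * s) mod a 1 = 0"
      using r_def by (simp add: mod_diff_eq[symmetric] mod_diff_left_eq)
    then obtain q where q: "n - r * s = a 1 * q" by auto
    have q0: "q \<ge> 0" using q rs a1
      by (metis diff_ge_0_iff_ge zero_le_mult_iff linorder_not_le)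
    define c2 where "c2 = (\<lambda>i. r * c1 i + (if i = 1 then q else 0))"
    have "(\<Sum>i=1..d. c2 i * a i) = (\<Sum>i=1..d. r * (c1 i * a i) + (if i = 1 then q * a i else 0))"
      unfolding c2_def by (rule sum.cong) (auto simp: algebra_simps)
    also have "\<dots> = r * s + q * a 1"
      using \<open>d \<ge> 1\<close> by (simp add: sum.distrib sum_distrib_left s_def)
    also have "\<dots> = n" using q by (simp add: algebra_simps)
    finally have "(\<Sum>i=1..d. c2 i * a i) = n" .
    moreover have "\<forall>i\<in>{1..d}. c2 i \<ge> 0" using c1nn r q0 unfolding c2_def by auto
    ultimately show "n \<in> Tset d a" unfolding Tset_def mem_Collect_eq
      by (intro exI[of _ c2]) auto
  qed
qed

lemma transition:
  "P (k0::int) \<Longrightarrow> \<not> P (k0 + int n) \<Longrightarrow> \<exists>k. P k \<and> \<not> P (k + 1)"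
proof (induction n)
  case 0 then show ?case by simp
next
  case (Suc n)
  show ?case
  proof (cases "P (k0 + int n)")
    case True
    then show ?thesis using Suc.prems by (intro exI[of _ "k0 + int n"]) (simp add: ac_simps)
  next
    case False
    then show ?thesis using Suc by blast
  qed
qed

theorem mainTheorem15:
  fixes d :: nat and a :: "nat \<Rightarrow> int" and N :: int and M :: "int set" and i :: int
  assumes "\<forall>j\<in>{1..d}. a j > 0"
    and "Gcd (a ` {1..d}) = 1"
    and "N > 0"
    and "maximal_in M (frakM d a N)"
    and "0 \<in> M"
    and "0 \<le> i" and "i < N"
  shows "\<exists>m\<in>M. m mod N = i"
proof (rule ccontr)
  assume nex: "\<not> (\<exists>m\<in>M. m mod N = i)"
  note pos = assms(1)
  obtain F where F: "\<forall>n\<ge>F. n \<in> Tset d a" using T_big[OF assms(1,2)] by blast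
  have MfM: "M \<in> frakM d a N" and mx: "\<forall>M'\<in>frakM d a N. M \<subseteq> M' \<longrightarrow> M' = M"
    using assms(4) unfolding maximal_in_def by auto
  have Mp: "\<And>m m'. m \<in> M \<Longrightarrow> m' \<in> M \<Longrightarrow> m - m' - N \<notin> Tset d a"
    using MfM unfolding frakM_def Sset_iff by blast
  have blocked: "\<exists>m\<in>M. x - m - N \<in> Tset d a \<or> m - x - N \<in> Tset d a" if "x mod N = i" for x
  proof -
    have "x \<notin> M" using nex that by auto
    hence "insert x M \<noteq> M" by auto
    hence "insert x M \<notin> frakM d a N" using mx by auto
    then obtain u v where uv: "u \<in> insert x M" "v \<in> insert x M" "u - v \<in> Sset d a N"
      unfolding frakM_def by blast
    have z: "\<not> (0 - N \<in> Tset d a)" using T_nonneg[OF pos] assms(3) by force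
    have z': "0 \<notin> Sset d a N" using z Sset_iff by simp
    have nM: "u - v \<notin> Sset d a N" if "u \<in> M" "v \<in> M" for u v
      using MfM that unfolding frakM_def by blast
    consider "u = x" "v = x" | "u = x" "v \<in> M" | "u \<in> M" "v = x" | "u \<in> M" "v \<in> M"
      using uv by auto
    then show ?thesis
    proof cases
      case 1 then show ?thesis using uv z' by simp
    next
      case 2 then show ?thesis using uv(3) unfolding Sset_iff by (auto simp: algebra_simps)
    next
      case 3 then show ?thesis using uv(3) unfolding Sset_iff by (auto simp: algebra_simps)
    next
      case 4 then show ?thesis using uv(3) nM by blast
    qed
  qed
  have Mbound: "m < F + N" if "m \<in> M" for m
  proof (rule ccontr)
    assume "\<not> m < F + N"
    hence "m - 0 - N \<in> Tset d a" using F by auto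
    thus False using Mp[OF that assms(5)] by blast
  qed
  define P where "P = (\<lambda>k. \<exists>m\<in>M. m - (i + k * N) - N \<in> Tset d a)"
  define k0 where "k0 = -(\<bar>i\<bar> + \<bar>F\<bar> + N + 1)"
  define k1 where "k1 = \<bar>i\<bar> + \<bar>F\<bar> + N"
  have "(\<bar>i\<bar> + \<bar>F\<bar> + N + 1) * 1 \<le> (\<bar>i\<bar> + \<bar>F\<bar> + N + 1) * N"
    using assms(3) by (intro mult_left_mono) auto
  moreover have "-k0 = \<bar>i\<bar> + \<bar>F\<bar> + N + 1" unfolding k0_def by simp
  ultimately have "-k0 * N \<ge> -k0" by simp
  moreover have "-(i + k0 * N) - N = -i + (-k0 * N) - N" by (simp add: algebra_simps)
  moreover have "-k0 = \<bar>i\<bar> + \<bar>F\<bar> + N + 1" unfolding k0_def by simp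
  ultimately have "-(i + k0 * N) - N \<ge> F" by linarith
  hence P0: "P k0" unfolding P_def using assms(5) F by force
  have "(\<bar>i\<bar> + \<bar>F\<bar> + N) * 1 \<le> (\<bar>i\<bar> + \<bar>F\<bar> + N) * N"
    using assms(3) by (intro mult_left_mono) auto
  hence "k1 * N \<ge> k1" unfolding k1_def by simp
  moreover have "k1 = \<bar>i\<bar> + \<bar>F\<bar> + N" unfolding k1_def by simp
  ultimately have x1: "i + k1 * N \<ge> F + N" by linarith
  have P1: "\<not> P k1"
  proof
    assume "P k1"
    then obtain m where m: "m \<in> M" "m - (i + k1 * N) - N \<in> Tset d a" unfolding P_def by blast
    have "m - (i + k1 * N) - N < 0" using Mbound[OF m(1)] x1 assms(3) by linarith
    thus False using T_nonneg[OF pos m(2)] by linarith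
  qed
  have "k0 < k1" unfolding k0_def k1_def using assms(3) by simp
  then obtain n where "k1 = k0 + int n" by (metis less_imp_le zle_iff_zadd)
  then obtain k where k: "P k" "\<not> P (k + 1)" using transition[of P k0 n] P0 P1 by auto
  define x where "x = i + (k + 1) * N"
  have "x mod N = i" unfolding x_def using assms(6,7) by simp
  then obtain m' where m': "m' \<in> M" "x - m' - N \<in> Tset d a \<or> m' - x - N \<in> Tset d a"
    using blocked by blast
  have "\<not> (m' - x - N \<in> Tset d a)" using k(2) m'(1) unfolding P_def x_def by blast
  hence m'2: "x - m' - N \<in> Tset d a" using m' by blast
  obtain m where m: "m \<in> M" "m - (i + k * N) - N \<in> Tset d a" using k(1) unfolding P_def by blast
  have eqx: "m - x = m - (i + k * N) - N" unfolding x_def by (simp add: algebra_simps)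
  have mx2: "m - x \<in> Tset d a" unfolding eqx by (rule m(2))
  have "(m - x) + (x - m' - N) \<in> Tset d a" by (rule T_add[OF mx2 m'2])
  hence "m - m' - N \<in> Tset d a" by (simp add: algebra_simps)
  thus False using Mp[OF m(1) m'(1)] by blast
qed

end
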